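(* Let $\xi(s)=\pi^{-s/2}\Gamma(s/2)\zeta(s)$, $\chi(s)=s(s-1)\xi(s)$, $A=\pi/3-1$, and \[ \begin{aligned} Z_1(s) & = (s-1)\chi(2s) \Bigl[(s-1)(3s-2)(As-A+1)\chi(s+1)\chi(3s) - (s+1)(s-2)\chi(s)\chi(3s-1) - 2(s-1)(s-2)\chi(s)\chi(3s) \Bigr] \\ & \quad - s \, \chi(2s-1) \Bigl[ s(3s-1)(As-1)\chi(s-1)\chi(3s-2) + (s+1)(s-2)\chi(s)\chi(3s-1) + 2s(s+1)\chi(s)\chi(3s-2) \Bigr]. \end{aligned} \] Then $Z_1(s)$ has no zero in the half-plane $\mathrm{Re}(s)\geq 20$. *)

theory Defs
  imports "HOL-Analysis.Analysis"
begin

text \<open>This agrees with the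
Riemann zeta function on the half-plane Re s > 1, which contains every point at
which it is evaluated in the statement (all arguments have real part at least 19).\<close>
definition zeta :: "complex \<Rightarrow> complex" where
  "zeta s = (\<Sum>n. 1 / (of_nat (Suc n)) powr s)"

definition xi :: "complex \<Rightarrow> complex" where
  "xi s = (of_real pi) powr (- s / 2) * Gamma (s / 2) * zeta s"

definition chi :: "complex \<Rightarrow> complex" where
  "chi s = s * (s - 1) * xi s"

definition A_const :: complex where
  "A_const = of_real (pi / 3 - 1)"

definition Z1 :: "complex \<Rightarrow> complex" where
  "Z1 s =
     (s - 1) * chi (2 * s) *
       ((s - 1) * (3 * s - 2) * (A_const * s - A_const + 1) * chi (s + 1) * chi (3 * s)
        - (s + 1) * (s - 2) * chi s * chi (3 * s - 1)
        - 2 * (s - 1) * (s - 2) * chi s * chi (3 * s))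
   - s * chi (2 * s - 1) *
       (s * (3 * s - 1) * (A_const * s - 1) * chi (s - 1) * chi (3 * s - 2)
        + (s + 1) * (s - 2) * chi s * chi (3 * s - 1)
        + 2 * s * (s + 1) * chi s * chi (3 * s - 2))"

end

theory Submission
  imports Defs
begin


lemma step_ineq:
  fixes w :: complex assumes "Re w > 0"
  shows "Re w * cmod (w + 1/2) \<le> cmod w * (Re w + 1/2)"
proof -
  have e1: "(cmod (w+1/2))^2 = (Re w + 1/2)^2 + (Im w)^2" by (simp add: cmod_power2)
  have e2: "(cmod w)^2 = (Re w)^2 + (Im w)^2" by (simp add: cmod_power2)
  have k: "(Re w)^2 * (Im w)^2 \<le> (Re w + 1/2)^2 * (Im w)^2"
    using assms by (intro mult_right_mono power_mono) auto
  have "(Re w * cmod (w + 1/2))^2 = (Re w)^2 * (Re w + 1/2)^2 + (Re w)^2 * (Im w)^2"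
    by (simp add: power_mult_distrib e1 algebra_simps)
  also have "\<dots> \<le> (Re w)^2 * (Re w + 1/2)^2 + (Re w + 1/2)^2 * (Im w)^2" using k by simp
  also have "\<dots> = (cmod w)^2 * (Re w + 1/2)^2" by (simp add: e2 algebra_simps)
  also have "\<dots> = (cmod w * (Re w + 1/2))^2" by (simp add: power_mult_distrib)
  finally have "(Re w * cmod (w + 1/2))^2 \<le> (cmod w * (Re w + 1/2))^2" .
  moreover have "0 \<le> cmod w * (Re w + 1/2)" using assms by simp
  ultimately show ?thesis by (rule power2_le_imp_le)
qed

lemma poch_ineq:
  fixes z :: complex assumes "Re z > 0"
  shows "cmod (pochhammer (of_real (Re z)) m) * cmod (pochhammer (z + 1/2) m)
       \<le> cmod (pochhammer z m) * cmod (pochhammer (of_real (Re z) + 1/2) m)"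
proof -
  have n1: "cmod (of_real (Re z) + of_nat i) = Re (z + of_nat i)" for i
  proof -
    have "of_real (Re z) + (of_nat i::complex) = of_real (Re z + real i)" by simp
    thus ?thesis using assms by (simp only: norm_of_real) simp
  qed
  have n2: "cmod (of_real (Re z) + 1/2 + of_nat i) = Re (z + of_nat i) + 1/2" for i
  proof -
    have "of_real (Re z) + 1/2 + (of_nat i::complex) = of_real (Re z + real i + 1/2)" by simp
    thus ?thesis using assms by (simp only: norm_of_real) simp
  qed
  have "cmod (pochhammer (of_real (Re z)) m) * cmod (pochhammer (z + 1/2) m)
     = (\<Prod>i\<in>{0..<m}. Re (z + of_nat i) * cmod (z + of_nat i + 1/2))"
    unfolding pochhammer_prod prod_norm[symmetric] prod.distrib[symmetric] n1
    by (intro prod.cong refl) (simp only: add.assoc add.commute[of "1/2"])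
  also have "\<dots> \<le> (\<Prod>i\<in>{0..<m}. cmod (z + of_nat i) * (Re (z + of_nat i) + 1/2))"
  proof (intro prod_mono conjI)
    fix i assume "i \<in> {0..<m}"
    have p: "Re (z + of_nat i) > 0" using assms by simp
    show "0 \<le> Re (z + of_nat i) * cmod (z + of_nat i + 1/2)" using p by simp
    show "Re (z + of_nat i) * cmod (z + of_nat i + 1/2) \<le> cmod (z + of_nat i) * (Re (z + of_nat i) + 1/2)"
      by (rule step_ineq[OF p])
  qed
  also have "\<dots> = cmod (pochhammer z m) * cmod (pochhammer (of_real (Re z) + 1/2) m)"
    unfolding pochhammer_prod prod_norm[symmetric] prod.distrib[symmetric] n2
    by (rule refl)
  finally show ?thesis .
qed

lemma norm_GS: "cmod (Gamma_series w n) = fact n * exp (Re w * ln (real n)) / cmod (pochhammer w (n+1))"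
  unfolding Gamma_series_def by (simp add: norm_divide norm_mult)

lemma poch_nz0: "Re w > 0 \<Longrightarrow> pochhammer w m \<noteq> 0"
  by (auto simp: pochhammer_eq_0_iff)

lemma gs_ineq:
  fixes z :: complex assumes z: "Re z > 0"
  shows "cmod (Gamma_series z n) * cmod (Gamma_series (of_real (Re z) + 1/2) n)
     \<le> cmod (Gamma_series (of_real (Re z)) n) * cmod (Gamma_series (z + 1/2) n)"
proof -
  define P1 where "P1 = cmod (pochhammer z (n+1))"
  define P2 where "P2 = cmod (pochhammer (of_real (Re z) + 1/2) (n+1))"
  define P3 where "P3 = cmod (pochhammer (of_real (Re z)) (n+1))"
  define P4 where "P4 = cmod (pochhammer (z + 1/2) (n+1))"
  define a where "a = (fact n * exp (Re z * ln (real n))) * (fact n * exp ((Re z + 1/2) * ln (real n)))"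
  have pos: "P1 > 0" "P2 > 0" "P3 > 0" "P4 > 0" unfolding P1_def P2_def P3_def P4_def
    using z by (simp_all add: poch_nz0)
  have le: "P3 * P4 \<le> P1 * P2" unfolding P1_def P2_def P3_def P4_def by (rule poch_ineq[OF z])
  have "a / (P1 * P2) \<le> a / (P3 * P4)"
    using pos le by (intro divide_left_mono) (auto simp: a_def)
  moreover have "cmod (Gamma_series z n) * cmod (Gamma_series (of_real (Re z) + 1/2) n) = a / (P1 * P2)"
    unfolding norm_GS P1_def P2_def a_def by simp
  moreover have "cmod (Gamma_series (of_real (Re z)) n) * cmod (Gamma_series (z + 1/2) n) = a / (P3 * P4)"
    unfolding norm_GS P3_def P4_def a_def by simp
  ultimately show ?thesis by simp
qed

lemma gamma_cmp:
  fixes z :: complex assumes z: "Re z > 0"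
  shows "cmod (Gamma z) * Gamma (Re z + 1/2) \<le> Gamma (Re z) * cmod (Gamma (z + 1/2))"
proof -
  have l1: "(\<lambda>n. cmod (Gamma_series z n) * cmod (Gamma_series (of_real (Re z) + 1/2) n))
     \<longlonglongrightarrow> cmod (Gamma z) * cmod (Gamma (of_real (Re z) + 1/2))"
    by (intro tendsto_mult tendsto_norm Gamma_series_LIMSEQ)
  have l2: "(\<lambda>n. cmod (Gamma_series (of_real (Re z)) n) * cmod (Gamma_series (z + 1/2) n))
     \<longlonglongrightarrow> cmod (Gamma (of_real (Re z))) * cmod (Gamma (z + 1/2))"
    by (intro tendsto_mult tendsto_norm Gamma_series_LIMSEQ)
  have "cmod (Gamma z) * cmod (Gamma (of_real (Re z) + 1/2))
     \<le> cmod (Gamma (of_real (Re z))) * cmod (Gamma (z + 1/2))"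
    by (rule LIMSEQ_le[OF l1 l2]) (use gs_ineq[OF z] in blast)
  moreover have "cmod (Gamma (of_real (Re z))) = Gamma (Re z)"
    unfolding Gamma_complex_of_real norm_of_real using z by simp
  moreover have "cmod (Gamma (of_real (Re z) + 1/2)) = Gamma (Re z + 1/2)"
  proof -
    have eq: "of_real (Re z) + 1/2 = (of_real (Re z + 1/2) :: complex)" by simp
    have "cmod (Gamma (of_real (Re z + 1/2))) = Gamma (Re z + 1/2)"
      unfolding Gamma_complex_of_real norm_of_real using z by simp
    thus ?thesis by (simp only: eq)
  qed
  ultimately show ?thesis by (simp only:)
qed

lemma log_conv:
  fixes x :: real assumes x: "x > 0"
  shows "x * Gamma x \<le> sqrt (x + 1/2) * Gamma (x + 1/2)"
proof -
  have c: "ln (Gamma ((1 - 1/2) *\<^sub>R (x + 1/2) + (1/2) *\<^sub>R (x + 3/2)))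
      \<le> (1 - 1/2) * ln (Gamma (x + 1/2)) + (1/2) * ln (Gamma (x + 3/2))"
    using convex_onD[OF log_convex_Gamma_real, of "1/2" "x + 1/2" "x + 3/2"] x by simp
  have e: "(1 - 1/2) *\<^sub>R (x + 1/2) + (1/2) *\<^sub>R (x + 3/2) = x + 1" by (simp add: field_simps)
  have g1: "Gamma (x + 1) = x * Gamma x" using x by (intro Gamma_plus1) (auto simp: nonpos_Ints_def)
  have g2: "Gamma (x + 3/2) = (x + 1/2) * Gamma (x + 1/2)"
    using Gamma_plus1[of "x + 1/2"] x by (auto simp: nonpos_Ints_def add_ac)
  have pos: "Gamma x > 0" "Gamma (x + 1/2) > 0" "Gamma (x + 3/2) > 0" "Gamma (x + 1) > 0" using x by auto
  hence nz: "Gamma (x + 1/2) \<noteq> 0" "Gamma (x + 3/2) \<noteq> 0" "Gamma (x + 1) \<noteq> 0" by auto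
  have "2 * ln (Gamma (x + 1)) \<le> ln (Gamma (x + 1/2)) + ln (Gamma (x + 3/2))"
    using c unfolding e by simp
  hence "ln (Gamma (x + 1) ^ 2) \<le> ln (Gamma (x + 1/2) * Gamma (x + 3/2))"
    using pos nz x by (simp add: ln_mult ln_realpow)
  hence "Gamma (x + 1) ^ 2 \<le> Gamma (x + 1/2) * Gamma (x + 3/2)"
    using pos by (subst (asm) ln_le_cancel_iff) auto
  hence "(x * Gamma x)^2 \<le> (sqrt (x + 1/2) * Gamma (x + 1/2))^2"
  proof -
    have "(x * Gamma x)^2 = Gamma (x + 1) ^ 2" by (simp only: g1)
    also have "\<dots> \<le> Gamma (x + 1/2) * Gamma (x + 3/2)" by fact
    also have "\<dots> = (x + 1/2) * Gamma (x + 1/2) ^ 2" by (simp only: g2 power2_eq_square mult_ac)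
    also have "\<dots> = (sqrt (x + 1/2) * Gamma (x + 1/2))^2" using x by (simp add: power_mult_distrib)
    finally show ?thesis .
  qed
  moreover have "0 \<le> sqrt (x + 1/2) * Gamma (x + 1/2)" using pos x by simp
  ultimately show ?thesis by (rule power2_le_imp_le)
qed

lemma gamma_ratio:
  fixes z :: complex assumes z: "Re z > 0"
  shows "cmod (Gamma z) \<le> sqrt (Re z + 1/2) / Re z * cmod (Gamma (z + 1/2))"
proof -
  have a: "cmod (Gamma z) * Gamma (Re z + 1/2) \<le> Gamma (Re z) * cmod (Gamma (z + 1/2))"
    by (rule gamma_cmp[OF z])
  have b: "Re z * Gamma (Re z) \<le> sqrt (Re z + 1/2) * Gamma (Re z + 1/2)" by (rule log_conv[OF z])
  have p: "Gamma (Re z + 1/2) > 0" using z by auto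
  have "Re z * (cmod (Gamma z) * Gamma (Re z + 1/2)) \<le> Re z * Gamma (Re z) * cmod (Gamma (z + 1/2))"
    using a z by (simp add: mult_left_mono mult.assoc)
  also have "\<dots> \<le> sqrt (Re z + 1/2) * Gamma (Re z + 1/2) * cmod (Gamma (z + 1/2))"
    using b by (intro mult_right_mono) auto
  finally have "(Re z * cmod (Gamma z)) * Gamma (Re z + 1/2) \<le> (sqrt (Re z + 1/2) * cmod (Gamma (z + 1/2))) * Gamma (Re z + 1/2)"
    by (simp add: mult_ac)
  hence "Re z * cmod (Gamma z) \<le> sqrt (Re z + 1/2) * cmod (Gamma (z + 1/2))"
    using p by simp
  thus ?thesis using z by (simp add: field_simps)
qed


lemma telesc: "(\<Sum>i<n. 1 / (real (i+1) * real (i+2))) = 1 - 1 / real (n+1)"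
proof (induction n)
  case 0 then show ?case by simp
next
  case (Suc n)
  have "(\<Sum>i<Suc n. 1 / (real (i+1) * real (i+2))) = (1 - 1 / real (n+1)) + 1 / (real (n+1) * real (n+2))"
    using Suc by simp
  also have "\<dots> = 1 - 1 / real (Suc n + 1)"
  proof -
    have p: "real (n+1) > 0" "real (n+2) > 0" by auto
    show ?thesis using p by (simp add: field_simps del: of_nat_add of_nat_Suc) (simp add: algebra_simps)
  qed
  finally show ?case .
qed

lemma term_bound:
  assumes w: "Re w \<ge> 19"
  shows "cmod (1 / (of_nat (Suc (Suc n)) powr w)) \<le> 1 / (2^17 * (real (n+1) * real (n+2)))"
proof -
  define m where "m = real (n+2)"
  have m2: "m \<ge> 2" unfolding m_def by simp
  have nrm: "cmod (of_nat (Suc (Suc n)) powr w) = m powr Re w"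
    unfolding m_def by (subst norm_powr_real_powr) auto
  have a: "m powr Re w \<ge> m powr 19" using m2 w by (intro powr_mono) auto
  have b: "m powr 19 = m^17 * m^2" using m2 by (simp add: powr_realpow flip: power_add)
  have c: "m^17 \<ge> 2^17" using m2 by (intro power_mono) auto
  have d: "m^2 \<ge> real (n+1) * real (n+2)" unfolding m_def power2_eq_square by (intro mult_right_mono) auto
  have "2^17 * (real (n+1) * real (n+2)) \<le> m^17 * m^2"
    using c d m2 by (intro mult_mono) auto
  hence "m powr Re w \<ge> 2^17 * (real (n+1) * real (n+2))" using a b by linarith
  hence "1 / (m powr Re w) \<le> 1 / (2^17 * (real (n+1) * real (n+2)))"
    using m2 by (intro divide_left_mono) (auto intro!: mult_pos_pos)
  thus ?thesis unfolding norm_divide nrm norm_one .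
qed

lemma zeta_near:
  assumes w: "Re w \<ge> 19"
  shows "cmod (zeta w - 1) \<le> 1 / 2^17"
proof -
  define f where "f = (\<lambda>n. 1 / (of_nat (Suc n) :: complex) powr w)"
  define g where "g = (\<lambda>n. 1 / (2^17 * (real (n+1) * real (n+2))))"
  have fb: "norm (f (Suc n)) \<le> g n" for n unfolding f_def g_def using term_bound[OF w] by simp
  have gs: "(\<Sum>i<n. g i) \<le> 1 / 2^17" for n
  proof -
    have "(\<Sum>i<n. g i) = (1 / 2^17) * (\<Sum>i<n. 1 / (real (i+1) * real (i+2)))"
      unfolding g_def sum_distrib_left by (intro sum.cong) auto
    also have "\<dots> \<le> 1 / 2^17" unfolding telesc by simp
    finally show ?thesis .
  qed
  have sg: "summable g" by (rule summableI_nonneg_bounded[OF _ gs]) (auto simp: g_def)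
  have sf1: "summable (\<lambda>n. f (Suc n))" by (rule summable_comparison_test'[OF sg fb])
  hence sf: "summable f" by (simp add: summable_Suc_iff)
  have "f 0 = 1" unfolding f_def by simp
  hence "zeta w - 1 = (\<Sum>n. f (Suc n))" using suminf_split_head[OF sf] unfolding zeta_def f_def by simp
  hence "cmod (zeta w - 1) \<le> suminf g" using norm_suminf_le[OF fb sg] by simp
  also have "\<dots> \<le> 1 / 2^17" by (rule suminf_le_const[OF sg gs])
  finally show ?thesis .
qed


lemma cmp:
  fixes z w :: complex
  assumes "\<bar>Re z\<bar> \<le> \<bar>Re w\<bar>" "\<bar>Im z\<bar> \<le> \<bar>Im w\<bar>"
  shows "cmod z \<le> cmod w"
  unfolding cmod_def using assms
  by (intro real_sqrt_le_mono add_mono) (simp_all add: abs_le_square_iff)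

lemma nm:
  fixes x y :: complex
  assumes "norm x \<le> X" "norm y \<le> Y"
  shows "norm (x * y) \<le> X * Y"
proof -
  have "norm (x * y) = norm x * norm y" by (simp add: norm_mult)
  also have "\<dots> \<le> X * Y" using assms by (intro mult_mono) (auto intro: order_trans[OF norm_ge_zero])
  finally show ?thesis .
qed

lemma nge:
  fixes x y :: complex
  assumes "norm x \<ge> X" "norm y \<ge> Y" "X \<ge> 0" "Y \<ge> 0"
  shows "norm (x * y) \<ge> X * Y"
proof -
  have "norm (x * y) = norm x * norm y" by (simp add: norm_mult)
  moreover have "X * Y \<le> norm x * norm y" using assms by (intro mult_mono) auto
  ultimately show ?thesis by simp
qed

lemma sqrt_bound:
  fixes x x0 c :: real
  assumes "x \<ge> x0" "x0 > 0" "c > 0" "c^2 * x0 \<ge> 1" "c^2 * x0 * x0 - x0 \<ge> 1/2"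
  shows "sqrt (x + 1/2) / x \<le> c"
proof -
  have xp: "x > 0" using assms by simp
  have "(c^2 * x0 - 1) * x0 \<le> (c^2 * x0 - 1) * x" using assms by (intro mult_left_mono) auto
  hence "x + 1/2 \<le> c^2 * x0 * x" using assms by (simp add: algebra_simps)
  also have "\<dots> \<le> c^2 * x * x" using assms xp by (intro mult_right_mono) auto
  also have "\<dots> = (c * x)^2" by (simp add: power2_eq_square)
  finally have "sqrt (x + 1/2) \<le> sqrt ((c * x)^2)" by (rule real_sqrt_le_mono)
  also have "\<dots> = c * x" using assms xp by simp
  finally show ?thesis using xp by (simp add: divide_le_eq mult.commute)
qed

lemma zeta_up: "Re w \<ge> 19 \<Longrightarrow> cmod (zeta w) \<le> 1 + 1/2^17"
  using zeta_near[of w] norm_triangle_ineq2[of "zeta w" 1] by simp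

lemma zeta_lo: "Re w \<ge> 19 \<Longrightarrow> cmod (zeta w) \<ge> 1 - 1/2^17"
  using zeta_near[of w] norm_triangle_ineq3[of "zeta w" 1] by (simp add: norm_minus_commute)

lemma zr:
  fixes p q :: complex and k :: nat
  assumes "norm p \<le> (1 + 1/2^17)^k" "norm q \<ge> (1 - 1/2^17)^k" "k \<le> 3"
  shows "norm (p / q) \<le> 101/100"
proof -
  have "norm (p / q) = norm p / norm q" by (simp add: norm_divide)
  also have "\<dots> \<le> (1 + 1/2^17)^k / (1 - 1/2^17)^k"
    using assms by (intro frac_le) auto
  also have "\<dots> \<le> 101/100"
  proof -
    have "k \<in> {0,1,2,3}" using assms by auto
    thus ?thesis by (auto simp: power_divide)
  qed
  finally show ?thesis .
qed

lemma gam_nz: "Re z > 0 \<Longrightarrow> Gamma z \<noteq> 0"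
  by (auto simp: Gamma_eq_zero_iff elim!: nonpos_Ints_cases)

lemma gam_nonpos: "Re z > 0 \<Longrightarrow> z \<notin> \<int>\<^sub>\<le>\<^sub>0"
  by (auto elim!: nonpos_Ints_cases)

lemma pp: "w = x + y \<Longrightarrow> (of_real pi :: complex) powr w = of_real pi powr x * of_real pi powr y"
  by (simp add: powr_add)

lemma gr:
  fixes z :: complex and c lo :: real
  assumes "Re z \<ge> lo" "lo > 0" "c > 0" "c^2 * lo \<ge> 1" "c^2 * lo * lo - lo \<ge> 1/2"
  shows "norm (Gamma z / Gamma (z + 1/2)) \<le> c"
proof -
  have p: "Re z > 0" using assms by simp
  have nz: "Gamma (z + 1/2) \<noteq> 0" using p by (intro gam_nz) simp
  have "cmod (Gamma z) \<le> sqrt (Re z + 1/2) / Re z * cmod (Gamma (z + 1/2))" by (rule gamma_ratio[OF p])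
  also have "\<dots> \<le> c * cmod (Gamma (z + 1/2))"
    using sqrt_bound[OF assms] by (intro mult_right_mono) auto
  finally show ?thesis using nz by (simp add: norm_divide divide_le_eq)
qed

lemma inv_le:
  fixes x :: complex
  assumes "norm x \<ge> a" "a > 0"
  shows "norm (1/x) \<le> 1/a"
proof -
  have "norm (1/x) = 1 / norm x" by (simp add: norm_divide)
  also have "\<dots> \<le> 1 / a"
  proof -
    have "norm x > 0" using assms by linarith
    thus ?thesis using assms by (intro divide_left_mono) auto
  qed
  finally show ?thesis .
qed

lemma absaux:
  fixes K al :: real
  assumes "K \<ge> 20 * al" "al > 0" "al < 2"
  shows "\<bar>K - 1\<bar> \<le> \<bar>K - al + 1\<bar>"
  using assms by (auto simp: abs_if)

theorem proposition6p1:
  fixes s :: complex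
  assumes "Re s \<ge> 20"
  shows "Z1 s \<noteq> 0"
proof -
  have sg: "Re s \<ge> 20" by (rule assms)
  define A where "A = A_const"
  define L where "L = A * s - A + 1"
  define E where "E = (of_real pi :: complex) powr (-s/2)"
  define Q where "Q = (of_real pi :: complex) powr (1/2)"
  define Gg where "Gg = Gamma s"
  define Gh where "Gh = Gamma (s - 1/2)"
  define Ga where "Ga = Gamma (s/2)"
  define Gb where "Gb = Gamma ((s+1)/2)"
  define Gc where "Gc = Gamma (3 * s / 2)"
  define Gd where "Gd = Gamma ((3* s-1)/2)"
  define z2s where "z2s = zeta (2* s)"
  define z2s1 where "z2s1 = zeta (2* s-1)"
  define zs1 where "zs1 = zeta (s+1)"
  define zs where "zs = zeta s"
  define zsm where "zsm = zeta (s-1)"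
  define z3s where "z3s = zeta (3* s)"
  define z3s1 where "z3s1 = zeta (3* s-1)"
  define z3s2 where "z3s2 = zeta (3* s-2)"
  have nE: "cmod E = pi powr (- Re s / 2)" unfolding E_def
    by (subst norm_powr_real_powr) auto
  have nQ: "cmod Q = sqrt pi" unfolding Q_def
    by (subst norm_powr_real_powr) (auto simp: powr_half_sqrt)
  have nEp: "cmod E > 0" unfolding nE by simp
  hence Enz: "E \<noteq> 0" by auto
  have Qnz: "Q \<noteq> 0" using nQ by auto
  have P1: "(of_real pi :: complex) powr (-s/2) = E" unfolding E_def ..
  have P2: "(of_real pi :: complex) powr (-s/2 + -s/2) = E*E" unfolding E_def by (rule pp) simp
  have P3: "(of_real pi :: complex) powr (-s/2 + -s/2 + -s/2) = E*E*E" unfolding E_def by (simp only: powr_add)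
  have PQ: "(of_real pi :: complex) powr (1/2) = Q" unfolding Q_def ..
  have ns1: "s - 1 \<noteq> 0" using sg by (auto dest: arg_cong[where f=Re])
  have n3s2: "3 * s - 2 \<noteq> 0" using sg by (auto dest: arg_cong[where f=Re])
  have X2s: "chi (2 * s) = 2 * s*(2 * s-1)*(E*E)*Gg*z2s"
  proof -
    have "(of_real pi :: complex) powr (-(2 * s)/2) = E*E" unfolding P2[symmetric] by (rule arg_cong[where f="\<lambda>w. (of_real pi :: complex) powr w"]) simp
    moreover have "2 * s / 2 = s" by simp
    ultimately show ?thesis unfolding chi_def xi_def Gg_def z2s_def by simp
  qed
  have X2s1: "chi (2 * s-1) = (2 * s-1)*(2 * s-2)*(E*E*Q)*Gh*z2s1"
  proof -
    have "(of_real pi :: complex) powr (-(2 * s - 1)/2) = E*E*Q" unfolding P2[symmetric] PQ[symmetric] by (rule pp) (simp add: field_simps)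
    moreover have "Gamma ((2 * s - 1) / 2) = Gh" unfolding Gh_def by (rule arg_cong[where f=Gamma]) (simp add: field_simps)
    moreover have "2 * s - 1 - 1 = 2 * s - 2" by simp
    ultimately show ?thesis unfolding chi_def xi_def z2s1_def[symmetric] by (simp only:) (simp add: mult_ac)
  qed
  have Xs1: "chi (s+1) = (s+1)* s*(E/Q)*Gb*zs1"
  proof -
    have "E = (of_real pi :: complex) powr (-(s + 1)/2) * Q" unfolding P1[symmetric] PQ[symmetric] by (rule pp) (simp add: field_simps)
    hence "(of_real pi :: complex) powr (-(s + 1)/2) = E/Q" using Qnz by (simp add: field_simps)
    thus ?thesis unfolding chi_def xi_def Gb_def[symmetric] zs1_def[symmetric] by (simp only:) (simp add: mult_ac)
  qed
  have Xs: "chi s = s*(s-1)*E*Ga*zs"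
    unfolding chi_def xi_def Ga_def zs_def E_def by simp
  have Xsm: "chi (s-1) = 2*(s-2)*(E*Q)*Gb*zsm"
  proof -
    have "(of_real pi :: complex) powr (-(s - 1)/2) = E*Q" unfolding P1[symmetric] PQ[symmetric] by (rule pp) (simp add: field_simps)
    moreover have "Gb = (s-1)/2 * Gamma ((s-1)/2)"
    proof -
      have "(s-1)/2 + 1 = (s+1)/2" by (simp add: field_simps)
      moreover have "(s-1)/2 \<notin> \<int>\<^sub>\<le>\<^sub>0" using sg by (intro gam_nonpos) simp
      ultimately show ?thesis unfolding Gb_def by (metis Gamma_plus1)
    qed
    hence "Gamma ((s-1)/2) = 2 * Gb / (s-1)" using ns1 by (simp add: field_simps)
    moreover have "s - 1 - 1 = s - 2" by simp
    ultimately show ?thesis unfolding chi_def xi_def zsm_def[symmetric] using ns1 by (simp only:) (simp add: field_simps)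
  qed
  have X3s: "chi (3 * s) = 3 * s*(3 * s-1)*(E*E*E)*Gc*z3s"
  proof -
    have "(of_real pi :: complex) powr (-(3 * s)/2) = E*E*E" unfolding P3[symmetric] by (rule arg_cong[where f="\<lambda>w. (of_real pi :: complex) powr w"]) (simp add: field_simps)
    thus ?thesis unfolding chi_def xi_def Gc_def[symmetric] z3s_def[symmetric] by (simp only:) (simp add: mult_ac)
  qed
  have X3s1: "chi (3 * s-1) = (3 * s-1)*(3 * s-2)*(E*E*E*Q)*Gd*z3s1"
  proof -
    have "(of_real pi :: complex) powr (-(3 * s - 1)/2) = E*E*E*Q" unfolding P3[symmetric] PQ[symmetric] by (rule pp) (simp add: field_simps)
    moreover have "3 * s - 1 - 1 = 3 * s - 2" by simp
    ultimately show ?thesis unfolding chi_def xi_def Gd_def[symmetric] z3s1_def[symmetric] by (simp only:) (simp add: mult_ac)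
  qed
  have X3s2: "chi (3 * s-2) = 6*(s-1)*(E*E*E*Q*Q)*Gc*z3s2"
  proof -
    have P4: "(of_real pi :: complex) powr (-s/2 + -s/2 + -s/2 + 1/2) = E*E*E*Q" unfolding P3[symmetric] PQ[symmetric] by (rule pp) simp
    have "(of_real pi :: complex) powr (-(3 * s - 2)/2) = E*E*E*Q*Q" unfolding P4[symmetric] unfolding PQ[symmetric] by (rule pp) (simp add: field_simps)
    moreover have "Gc = (3 * s - 2)/2 * Gamma ((3 * s - 2)/2)"
    proof -
      have "(3 * s - 2)/2 + 1 = 3 * s / 2" by (simp add: field_simps)
      moreover have "(3 * s - 2)/2 \<notin> \<int>\<^sub>\<le>\<^sub>0" using sg by (intro gam_nonpos) simp
      ultimately show ?thesis unfolding Gc_def by (metis Gamma_plus1)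
    qed
    hence "Gamma ((3 * s - 2)/2) = 2 * Gc / (3 * s - 2)" using n3s2 by (simp add: field_simps)
    moreover have "3 * s - 2 - 1 = 3 * (s - 1)" by simp
    ultimately show ?thesis unfolding chi_def xi_def z3s2_def[symmetric] using n3s2 by (simp only:) (simp add: field_simps)
  qed
  define T0 where "T0 = (s - 1) * chi (2 * s) * ((s - 1) * (3 * s - 2) * (A * s - A + 1) * chi (s + 1) * chi (3 * s))"
  define T1 where "T1 = (s - 1) * chi (2 * s) * ((s + 1) * (s - 2) * chi s * chi (3 * s - 1))"
  define T2 where "T2 = (s - 1) * chi (2 * s) * (2 * (s - 1) * (s - 2) * chi s * chi (3 * s))"
  define T3 where "T3 = s * chi (2 * s - 1) * (s * (3 * s - 1) * (A * s - 1) * chi (s - 1) * chi (3 * s - 2))"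
  define T4 where "T4 = s * chi (2 * s - 1) * ((s + 1) * (s - 2) * chi s * chi (3 * s - 1))"
  define T5 where "T5 = s * chi (2 * s - 1) * (2 * s * (s + 1) * chi s * chi (3 * s - 2))"
  have Zeq: "Z1 s = T0 - T1 - T2 - T3 - T4 - T5"
    unfolding Z1_def T0_def T1_def T2_def T3_def T4_def T5_def A_def by (simp add: algebra_simps)
  define m1 where "m1 = s - 1"
  define m2 where "m2 = s - 2"
  define p1 where "p1 = s + 1"
  define t1 where "t1 = 2 * s - 1"
  define q1 where "q1 = 3 * s - 1"
  define q2 where "q2 = 3 * s - 2"
  define As1 where "As1 = A * s - 1"
  have T0': "T0 = m1*(2 * s*t1*(E*E)*Gg*z2s)*(m1*q2*L*(p1* s*(E/Q)*Gb*zs1)*(3 * s*q1*(E*E*E)*Gc*z3s))"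
    unfolding T0_def X2s Xs1 X3s m1_def q2_def L_def p1_def t1_def q1_def by (simp add: algebra_simps)
  have T1': "T1 = m1*(2 * s*t1*(E*E)*Gg*z2s)*(p1*m2*(s*m1*E*Ga*zs)*(q1*q2*(E*E*E*Q)*Gd*z3s1))"
    unfolding T1_def X2s Xs X3s1 m1_def m2_def q2_def p1_def t1_def q1_def by (simp add: algebra_simps)
  have T2': "T2 = m1*(2 * s*t1*(E*E)*Gg*z2s)*(2*m1*m2*(s*m1*E*Ga*zs)*(3 * s*q1*(E*E*E)*Gc*z3s))"
    unfolding T2_def X2s Xs X3s m1_def m2_def t1_def q1_def by (simp add: algebra_simps)
  have T3': "T3 = s*(t1*(2*m1)*(E*E*Q)*Gh*z2s1)*(s*q1*As1*(2*m2*(E*Q)*Gb*zsm)*(6*m1*(E*E*E*Q*Q)*Gc*z3s2))"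
    unfolding T3_def X2s1 Xsm X3s2 m1_def m2_def t1_def q1_def As1_def by (simp add: algebra_simps)
  have T4': "T4 = s*(t1*(2*m1)*(E*E*Q)*Gh*z2s1)*(p1*m2*(s*m1*E*Ga*zs)*(q1*q2*(E*E*E*Q)*Gd*z3s1))"
    unfolding T4_def X2s1 Xs X3s1 m1_def m2_def t1_def q1_def q2_def p1_def by (simp add: algebra_simps)
  have T5': "T5 = s*(t1*(2*m1)*(E*E*Q)*Gh*z2s1)*(2 * s*p1*(s*m1*E*Ga*zs)*(6*m1*(E*E*E*Q*Q)*Gc*z3s2))"
    unfolding T5_def X2s1 Xs X3s2 m1_def t1_def p1_def by (simp add: algebra_simps)
  define r1 where "r1 = (1/3) * (m2/s) * (1/L) * (Q*Q) * (Ga/Gb) * (Gd/Gc) * ((zs*z3s1)/(zs1*z3s))"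
  define r2 where "r2 = 2 * (m2/p1) * (m1/q2) * (1/L) * Q * (Ga/Gb) * (zs/zs1)"
  define r3 where "r3 = 4 * (As1/L) * (m2/p1) * (1/s) * (1/q2) * (Q*Q*Q*Q*Q) * (Gh/Gg) * ((z2s1*zsm*z3s2)/(z2s*zs1*z3s))"
  define r4 where "r4 = (1/3) * (m2/s) * (1/L) * (Q*Q*Q) * (Gh/Gg) * (Ga/Gb) * (Gd/Gc) * ((z2s1*zs*z3s1)/(z2s*zs1*z3s))"
  define r5 where "r5 = 4 * (m1/q2) * (1/q1) * (1/L) * (Q*Q*Q*Q) * (Gh/Gg) * (Ga/Gb) * ((z2s1*zs*z3s2)/(z2s*zs1*z3s))"
  have ReA: "Re A = pi/3 - 1" "Im A = 0" unfolding A_def A_const_def by simp_all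
  have ReL: "Re L = (pi/3-1)*(Re s - 1) + 1"
  proof -
    have "Re L = Re A * (Re s - 1) + 1" unfolding L_def using ReA(2) by (simp add: algebra_simps)
    thus ?thesis by (simp only: ReA(1))
  qed
  have Apos: "pi/3 - 1 > 0" using pi_gt3 by simp
  have ReLge: "Re L \<ge> 1 + 19*(pi/3-1)"
  proof -
    have "(pi/3-1)*19 \<le> (pi/3-1)*(Re s - 1)" using Apos sg by (intro mult_left_mono) auto
    thus ?thesis unfolding ReL by simp
  qed
  have ReLp: "Re L > 0" using ReLge Apos by simp
  have zl: "\<And>w. Re w \<ge> 19 \<Longrightarrow> zeta w \<noteq> 0"
  proof -
    fix w :: complex assume "Re w \<ge> 19"
    have "cmod (zeta w) > 0" by (rule less_le_trans[OF _ zeta_lo[OF \<open>Re w \<ge> 19\<close>]]) simp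
    thus "zeta w \<noteq> 0" by auto
  qed
  have nonzero: "s \<noteq> 0" "m1 \<noteq> 0" "p1 \<noteq> 0" "q2 \<noteq> 0" "q1 \<noteq> 0" "t1 \<noteq> 0" "L \<noteq> 0"
    "Gg \<noteq> 0" "Gb \<noteq> 0" "Gc \<noteq> 0" "z2s \<noteq> 0" "zs1 \<noteq> 0" "z3s \<noteq> 0" "2 * s \<noteq> 0" "3 * s \<noteq> 0"
    using sg ReLp unfolding Gg_def Gb_def Gc_def z2s_def zs1_def z3s_def m1_def p1_def q2_def q1_def t1_def
    by (auto dest: arg_cong[where f=Re] intro!: gam_nz zl)
  have T0nz: "T0 \<noteq> 0"
    unfolding T0' using nonzero Enz Qnz by simp
  have e1: "T1 = T0 * r1" unfolding T1' T0' r1_def using nonzero Enz Qnz by (simp add: field_simps)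
  have e2: "T2 = T0 * r2" unfolding T2' T0' r2_def using nonzero Enz Qnz by (simp add: field_simps)
  have e3: "T3 = T0 * r3" unfolding T3' T0' r3_def using nonzero Enz Qnz by (simp add: field_simps)
  have e4: "T4 = T0 * r4" unfolding T4' T0' r4_def using nonzero Enz Qnz by (simp add: field_simps)
  have e5: "T5 = T0 * r5" unfolding T5' T0' r5_def using nonzero Enz Qnz by (simp add: field_simps)
  have ReA2: "Re (A * s) = (pi/3-1) * Re s" "Im (A * s) = (pi/3-1) * Im s"
    unfolding A_def A_const_def by simp_all
  have pi_lo: "pi \<ge> 3.141592653588" and pi_hi: "pi \<le> 3.1415926535899" using pi_approx by auto
  have fL: "norm (1/L) \<le> 100/189"
  proof -
    have "Re L \<ge> 189/100" using ReLge pi_lo by simp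
    hence "norm L \<ge> 189/100" using complex_Re_le_cmod[of L] by linarith
    from inv_le[OF this] show ?thesis by simp
  qed
  have fQ: "norm Q \<le> 178/100"
  proof -
    have "sqrt pi \<le> sqrt ((178/100)^2)" using pi_hi by (intro real_sqrt_le_mono) (simp add: power2_eq_square)
    thus ?thesis unfolding nQ by simp
  qed
  have fs: "norm s \<ge> 20" using sg complex_Re_le_cmod[of s] by linarith
  have f1s: "norm (1/s) \<le> 1/20" using inv_le[OF fs] by simp
  have f1q2: "norm (1/q2) \<le> 1/58"
  proof -
    have "norm q2 \<ge> 58" using sg complex_Re_le_cmod[of q2] unfolding q2_def by simp
    from inv_le[OF this] show ?thesis by simp
  qed
  have f1q1: "norm (1/q1) \<le> 1/59"
  proof -
    have "norm q1 \<ge> 59" using sg complex_Re_le_cmod[of q1] unfolding q1_def by simp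
    from inv_le[OF this] show ?thesis by simp
  qed
  have fm2s: "norm (m2/s) \<le> 1"
  proof -
    have "norm m2 \<le> norm s" unfolding m2_def using sg by (intro cmp) auto
    thus ?thesis using nonzero by (simp add: norm_divide field_simps)
  qed
  have fm2p1: "norm (m2/p1) \<le> 1"
  proof -
    have "norm m2 \<le> norm p1" unfolding m2_def p1_def using sg by (intro cmp) auto
    thus ?thesis using nonzero by (simp add: norm_divide field_simps)
  qed
  have fm1q2: "norm (m1/q2) \<le> 1/3"
  proof -
    have "norm (3 * m1) \<le> norm q2" unfolding m1_def q2_def using sg by (intro cmp) (auto simp: algebra_simps)
    hence "3 * norm m1 \<le> norm q2" by (simp add: norm_mult)
    thus ?thesis using nonzero by (simp add: norm_divide field_simps)
  qed
  have fAL: "norm (As1/L) \<le> 1"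
  proof -
    have RA: "Re As1 = (pi/3-1) * Re s - 1" "Im As1 = (pi/3-1) * Im s" unfolding As1_def using ReA2 by simp_all
    have RL: "Re L = (pi/3-1) * Re s - (pi/3-1) + 1" "Im L = (pi/3-1) * Im s" unfolding L_def using ReA2 ReA by simp_all
    have a1: "(pi/3-1) * Re s \<ge> (pi/3-1) * 20" using Apos sg by (intro mult_left_mono) auto
    have "\<bar>Re As1\<bar> \<le> \<bar>Re L\<bar>" unfolding RA RL using a1 Apos pi_hi
      by (intro absaux) (auto simp: mult.commute)
    hence "norm As1 \<le> norm L" by (intro cmp) (simp_all add: RA RL)
    thus ?thesis using nonzero by (simp add: norm_divide field_simps)
  qed
  have fab: "norm (Ga/Gb) \<le> 1/3"
  proof -
    have "norm (Gamma (s/2) / Gamma (s/2 + 1/2)) \<le> 1/3" using sg by (intro gr[where lo=10]) (auto simp: power2_eq_square)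
    moreover have "s/2 + 1/2 = (s+1)/2" by (simp add: field_simps)
    ultimately show ?thesis unfolding Ga_def Gb_def by simp
  qed
  have fdc: "norm (Gd/Gc) \<le> 1/5"
  proof -
    have "norm (Gamma ((3 * s - 1)/2) / Gamma ((3 * s - 1)/2 + 1/2)) \<le> 1/5" using sg by (intro gr[where lo="59/2"]) (auto simp: power2_eq_square)
    moreover have "(3 * s - 1)/2 + 1/2 = 3 * s / 2" by (simp add: field_simps)
    ultimately show ?thesis unfolding Gd_def Gc_def by simp
  qed
  have fhg: "norm (Gh/Gg) \<le> 1/4"
  proof -
    have "norm (Gamma (s - 1/2) / Gamma (s - 1/2 + 1/2)) \<le> 1/4" using sg by (intro gr[where lo="39/2"]) (auto simp: power2_eq_square)
    thus ?thesis unfolding Gh_def Gg_def by simp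
  qed
  have zus: "norm z2s \<le> 1 + 1/2^17" "norm z2s1 \<le> 1 + 1/2^17" "norm zs1 \<le> 1 + 1/2^17" "norm zs \<le> 1 + 1/2^17"
      "norm zsm \<le> 1 + 1/2^17" "norm z3s \<le> 1 + 1/2^17" "norm z3s1 \<le> 1 + 1/2^17" "norm z3s2 \<le> 1 + 1/2^17"
    unfolding z2s_def z2s1_def zs1_def zs_def zsm_def z3s_def z3s1_def z3s2_def using sg by - (rule zeta_up, simp)+
  have zls: "norm z2s \<ge> 1 - 1/2^17" "norm z2s1 \<ge> 1 - 1/2^17" "norm zs1 \<ge> 1 - 1/2^17" "norm zs \<ge> 1 - 1/2^17"
      "norm zsm \<ge> 1 - 1/2^17" "norm z3s \<ge> 1 - 1/2^17" "norm z3s1 \<ge> 1 - 1/2^17" "norm z3s2 \<ge> 1 - 1/2^17"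
    unfolding z2s_def z2s1_def zs1_def zs_def zsm_def z3s_def z3s1_def z3s2_def using sg by - (rule zeta_lo, simp)+
  have dpos: "(0::real) \<le> 1 - 1/2^17" by simp
  have ZR1: "norm ((zs*z3s1)/(zs1*z3s)) \<le> 101/100"
  proof (rule zr[where k=2])
    show "norm (zs*z3s1) \<le> (1 + 1/2^17)^2" unfolding power2_eq_square by (intro nm zus)
    show "norm (zs1*z3s) \<ge> (1 - 1/2^17)^2" unfolding power2_eq_square by (intro nge zls dpos)
  qed simp
  have ZR2: "norm (zs/zs1) \<le> 101/100"
    by (rule zr[where k=1]) (use zus zls in simp_all)
  have ZR3a: "norm ((z2s1*zsm*z3s2)/(z2s*zs1*z3s)) \<le> 101/100"
  proof (rule zr[where k=3])
    show "norm (z2s1*zsm*z3s2) \<le> (1 + 1/2^17)^3" unfolding power3_eq_cube by (intro nm zus)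
    show "norm (z2s*zs1*z3s) \<ge> (1 - 1/2^17)^3" unfolding power3_eq_cube by (intro nge zls dpos mult_nonneg_nonneg)
  qed simp
  have ZR3b: "norm ((z2s1*zs*z3s1)/(z2s*zs1*z3s)) \<le> 101/100"
  proof (rule zr[where k=3])
    show "norm (z2s1*zs*z3s1) \<le> (1 + 1/2^17)^3" unfolding power3_eq_cube by (intro nm zus)
    show "norm (z2s*zs1*z3s) \<ge> (1 - 1/2^17)^3" unfolding power3_eq_cube by (intro nge zls dpos mult_nonneg_nonneg)
  qed simp
  have ZR3c: "norm ((z2s1*zs*z3s2)/(z2s*zs1*z3s)) \<le> 101/100"
  proof (rule zr[where k=3])
    show "norm (z2s1*zs*z3s2) \<le> (1 + 1/2^17)^3" unfolding power3_eq_cube by (intro nm zus)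
    show "norm (z2s*zs1*z3s) \<ge> (1 - 1/2^17)^3" unfolding power3_eq_cube by (intro nge zls dpos mult_nonneg_nonneg)
  qed simp
  have c3: "norm (1/3 :: complex) \<le> 1/3" "norm (2 :: complex) \<le> 2" "norm (4 :: complex) \<le> 4" by simp_all
  have b1: "norm r1 \<le> 1/20"
  proof -
    have "norm r1 \<le> (1/3) * 1 * (100/189) * ((178/100) * (178/100)) * (1/3) * (1/5) * (101/100)"
      unfolding r1_def by (intro nm c3 fm2s fL fQ fab fdc ZR1)
    thus ?thesis by simp
  qed
  have b2: "norm r2 \<le> 1/4"
  proof -
    have "norm r2 \<le> 2 * 1 * (1/3) * (100/189) * (178/100) * (1/3) * (101/100)"
      unfolding r2_def by (intro nm c3 fm2p1 fm1q2 fL fQ fab ZR2)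
    thus ?thesis by simp
  qed
  have b3: "norm r3 \<le> 1/50"
  proof -
    have "norm r3 \<le> 4 * 1 * 1 * (1/20) * (1/58) * ((178/100) * (178/100) * (178/100) * (178/100) * (178/100)) * (1/4) * (101/100)"
      unfolding r3_def by (intro nm c3 fAL fm2p1 f1s f1q2 fQ fhg ZR3a)
    thus ?thesis by simp
  qed
  have b4: "norm r4 \<le> 1/50"
  proof -
    have "norm r4 \<le> (1/3) * 1 * (100/189) * ((178/100) * (178/100) * (178/100)) * (1/4) * (1/3) * (1/5) * (101/100)"
      unfolding r4_def by (intro nm c3 fm2s fL fQ fhg fab fdc ZR3b)
    thus ?thesis by simp
  qed
  have b5: "norm r5 \<le> 1/50"
  proof -
    have "norm r5 \<le> 4 * (1/3) * (1/59) * (100/189) * ((178/100) * (178/100) * (178/100) * (178/100)) * (1/4) * (1/3) * (101/100)"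
      unfolding r5_def by (intro nm c3 fm1q2 f1q1 fL fQ fhg fab ZR3c)
    thus ?thesis by simp
  qed
  have "Z1 s = T0 * (1 - (r1 + r2 + r3 + r4 + r5))"
    unfolding Zeq e1 e2 e3 e4 e5 by (simp add: algebra_simps)
  moreover have "1 - (r1 + r2 + r3 + r4 + r5) \<noteq> 0"
  proof
    assume "1 - (r1 + r2 + r3 + r4 + r5) = 0"
    hence "r1 + r2 + r3 + r4 + r5 = 1" by simp
    hence "1 = norm (r1 + r2 + r3 + r4 + r5)" by simp
    also have "\<dots> \<le> norm r1 + norm r2 + norm r3 + norm r4 + norm r5"
      by (intro order_trans[OF norm_triangle_ineq] add_mono order_refl)
    also have "\<dots> < 1" using b1 b2 b3 b4 b5 by simp
    finally show False by simp
  qed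
  ultimately show ?thesis using T0nz by simp
qed

end
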